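(* Let $0<\alpha\le2$, $j\ne0$, $V\in C^2(\mathbb{T})$, and $G(x)=p_0+\sum_{k=1}^{n}p_k\cos(2\pi kx)+\sum_{k=1}^nq_k\sin(2\pi kx)$ with $p_k^2+q_k^2>0$ for $1\le k\le n$. If $(m,\overline{H})\in C(\mathbb{T})\times\mathbb{R}$ solves problem (P), then there is $(a_0,\dots,a_n,b_1,\dots,b_n)\in\mathcal{C}$ solving the system (S) such that $$m(x)=\frac{c_j}{\left(a_0+\sum_{k=1}^{n}a_k\cos(2\pi kx)+b_k\sin(2\pi kx)-V(x)\right)^{1/\alpha}},\qquad \overline{H}=a_0-p_0.\tag{$*$}$$ Conversely, if $(a_0,\dots,a_n,b_1,\dots,b_n)\in\mathcal{C}$ solves (S), then $(m,\overline{H})$ defined by $( * )$ solves problem (P).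
   Context: $\mathbb{T}=\mathbb{R}/\mathbb{Z}$. Problem (P): find $(m,\overline{H})\in C(\mathbb{T})\times\mathbb{R}$ with $m>0$, $\int_{\mathbb{T}}m=1$, and $\frac{j^2}{2m(x)^\alpha}+V(x)=\int_{\mathbb{T}}G(x-y)m(y)\,dy+\overline{H}$ for all $x$. Set $c_j=(j^2/2)^{1/\alpha}$; $\phi_\alpha(t)=\frac{c_j\alpha}{\alpha-1}t^{(\alpha-1)/\alpha}$ if $\alpha\ne1$, $\phi_\alpha(t)=c_j\ln t$ if $\alpha=1$ ($t>0$). $\mathcal{C}\subset\mathbb{R}^{2n+1}$ is the set of $(a_0,\dots,a_n,b_1,\dots,b_n)$ with $a_0+\sum_{k=1}^n(a_k\cos(2\pi kx)+b_k\sin(2\pi kx))-V(x)>0$ for all $x\in\mathbb{T}$; on $\mathcal{C}$, $\Phi_\alpha(a_0,\dots,b_n)=\int_{\mathbb{T}}\phi_\alpha\big(a_0+\sum_{k=1}^n(a_k\cos(2\pi ky)+b_k\sin(2\pi ky))-V(y)\big)\,dy$. System (S): $\partial\Phi_\alpha/\partial a_0=1$, $\partial\Phi_\alpha/\partial a_k=\frac{p_ka_k+q_kb_k}{p_k^2+q_k^2}$, $\partial\Phi_\alpha/\partial b_k=\frac{p_kb_k-q_ka_k}{p_k^2+q_k^2}$ for $1\le k\le n$. *)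

theory Defs
  imports "HOL-Analysis.Analysis"
begin

text \<open>Functions on the torus T = R/Z are represented as 1-periodic functions on the reals;
  integrals over T are integrals over [0,1].\<close>

definition periodic1 :: "(real \<Rightarrow> real) \<Rightarrow> bool" where
  "periodic1 f \<longleftrightarrow> (\<forall>x. f (x + 1) = f x)"

definition contT :: "(real \<Rightarrow> real) \<Rightarrow> bool" where
  "contT f \<longleftrightarrow> continuous_on UNIV f \<and> periodic1 f"

definition C2T :: "(real \<Rightarrow> real) \<Rightarrow> bool" where
  "C2T f \<longleftrightarrow> periodic1 f \<and>
     (\<exists>f' f''. (\<forall>x. (f has_real_derivative f' x) (at x)) \<and>
               (\<forall>x. (f' has_real_derivative f'' x) (at x)) \<and> continuous_on UNIV f'')"

definition trig :: "nat \<Rightarrow> (nat \<Rightarrow> real) \<Rightarrow> (nat \<Rightarrow> real) \<Rightarrow> real \<Rightarrow> real" where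
  "trig n c d x = c 0 + (\<Sum>k=1..n. c k * cos (2 * pi * real k * x) + d k * sin (2 * pi * real k * x))"

definition cj :: "real \<Rightarrow> real \<Rightarrow> real" where
  "cj \<alpha> j = (j ^ 2 / 2) powr (1 / \<alpha>)"

definition phi :: "real \<Rightarrow> real \<Rightarrow> real \<Rightarrow> real" where
  "phi \<alpha> j t = (if \<alpha> = 1 then cj \<alpha> j * ln t
                 else cj \<alpha> j * \<alpha> / (\<alpha> - 1) * t powr ((\<alpha> - 1) / \<alpha>))"

definition solvesP :: "real \<Rightarrow> real \<Rightarrow> (real \<Rightarrow> real) \<Rightarrow> (real \<Rightarrow> real)
    \<Rightarrow> (real \<Rightarrow> real) \<Rightarrow> real \<Rightarrow> bool" where
  "solvesP \<alpha> j V G m H \<longleftrightarrow> contT m \<and> (\<forall>x. m x > 0) \<and> integral {0..1} m = 1 \<and>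
     (\<forall>x. j ^ 2 / (2 * m x powr \<alpha>) + V x = integral {0..1} (\<lambda>y. G (x - y) * m y) + H)"

definition inC :: "nat \<Rightarrow> (real \<Rightarrow> real) \<Rightarrow> (nat \<Rightarrow> real) \<Rightarrow> (nat \<Rightarrow> real) \<Rightarrow> bool" where
  "inC n V a b \<longleftrightarrow> (\<forall>x. trig n a b x - V x > 0)"

definition Phi :: "real \<Rightarrow> real \<Rightarrow> nat \<Rightarrow> (real \<Rightarrow> real) \<Rightarrow> (nat \<Rightarrow> real) \<Rightarrow> (nat \<Rightarrow> real) \<Rightarrow> real" where
  "Phi \<alpha> j n V a b = integral {0..1} (\<lambda>y. phi \<alpha> j (trig n a b y - V y))"

text \<open>System (S); partial derivatives as derivatives of the one-variable restrictions.\<close>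
definition solvesS :: "real \<Rightarrow> real \<Rightarrow> nat \<Rightarrow> (real \<Rightarrow> real) \<Rightarrow> (nat \<Rightarrow> real) \<Rightarrow> (nat \<Rightarrow> real)
    \<Rightarrow> (nat \<Rightarrow> real) \<Rightarrow> (nat \<Rightarrow> real) \<Rightarrow> bool" where
  "solvesS \<alpha> j n V p q a b \<longleftrightarrow>
     ((\<lambda>t. Phi \<alpha> j n V (a(0 := t)) b) has_real_derivative 1) (at (a 0)) \<and>
     (\<forall>k\<in>{1..n}.
        ((\<lambda>t. Phi \<alpha> j n V (a(k := t)) b) has_real_derivative
           (p k * a k + q k * b k) / (p k ^ 2 + q k ^ 2)) (at (a k)) \<and>
        ((\<lambda>t. Phi \<alpha> j n V a (b(k := t))) has_real_derivative
           (p k * b k - q k * a k) / (p k ^ 2 + q k ^ 2)) (at (b k)))"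

end

theory Submission imports Defs begin

lemma phi_deriv:
  assumes "0 < \<alpha>" "0 < s"
  shows "(phi \<alpha> j has_real_derivative cj \<alpha> j * s powr (-1/\<alpha>)) (at s)"
proof (cases "\<alpha> = 1")
  case True
  have "((\<lambda>t. cj \<alpha> j * ln t) has_real_derivative cj \<alpha> j * (1/s)) (at s)"
    using assms by (auto intro!: derivative_eq_intros)
  moreover have "s powr (-1/\<alpha>) = 1/s" using True assms by (simp add: powr_neg_one)
  ultimately show ?thesis using True by (simp add: phi_def[abs_def])
next
  case False
  have "((\<lambda>t. cj \<alpha> j * \<alpha> / (\<alpha> - 1) * t powr ((\<alpha> - 1) / \<alpha>)) has_real_derivative
     cj \<alpha> j * \<alpha> / (\<alpha> - 1) * (((\<alpha> - 1) / \<alpha>) * s powr ((\<alpha> - 1) / \<alpha> - 1))) (at s)"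
    using assms by (auto intro!: derivative_eq_intros)
  moreover have "cj \<alpha> j * \<alpha> / (\<alpha> - 1) * (((\<alpha> - 1) / \<alpha>) * s powr ((\<alpha> - 1) / \<alpha> - 1))
     = cj \<alpha> j * s powr (-1/\<alpha>)"
  proof -
    have "(\<alpha> - 1) / \<alpha> - 1 = -1/\<alpha>" using assms by (simp add: field_simps)
    thus ?thesis using False assms by (simp add: field_simps)
  qed
  ultimately show ?thesis using False by (simp add: phi_def[abs_def])
qed

lemma cont_trig: "continuous_on S (trig n a b)"
  unfolding trig_def[abs_def] by (intro continuous_intros)

lemma trig_periodic: "trig n a b (x + 1) = trig n a b x"
proof -
  have c: "cos (2 * pi * real k * (x + 1)) = cos (2 * pi * real k * x)"
   and s: "sin (2 * pi * real k * (x + 1)) = sin (2 * pi * real k * x)" for k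
  proof -
    have e: "2 * pi * real k * (x + 1) = 2 * pi * real k * x + 2 * pi * real_of_int (int k)"
      by (simp add: algebra_simps)
    have "cos (2 * pi * real_of_int (int k)) = 1" by (rule cos_int_2pin)
    moreover have "sin (2 * pi * real_of_int (int k)) = 0" by (rule sin_int_2pin)
    ultimately show "cos (2 * pi * real k * (x + 1)) = cos (2 * pi * real k * x)"
      "sin (2 * pi * real k * (x + 1)) = sin (2 * pi * real k * x)"
      unfolding e cos_add sin_add by simp_all
  qed
  show ?thesis unfolding trig_def c s ..
qed

lemma trig_upd0: "trig n (a(0 := t)) b y = trig n a b y + (t - a 0) * 1"
proof -
  have "(\<Sum>k=1..n. (a(0:=t)) k * cos (2 * pi * real k * y) + b k * sin (2 * pi * real k * y))
     = (\<Sum>k=1..n. a k * cos (2 * pi * real k * y) + b k * sin (2 * pi * real k * y))"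
    by (rule sum.cong) auto
  thus ?thesis unfolding trig_def by simp
qed

lemma trig_updk:
  assumes "k \<in> {1..n}"
  shows "trig n (a(k := t)) b y = trig n a b y + (t - a k) * cos (2 * pi * real k * y)"
proof -
  have "(\<Sum>i=1..n. (a(k:=t)) i * cos (2 * pi * real i * y) + b i * sin (2 * pi * real i * y))
     = (\<Sum>i=1..n. (a i * cos (2 * pi * real i * y) + b i * sin (2 * pi * real i * y))
         + (if i = k then (t - a k) * cos (2 * pi * real i * y) else 0))"
    by (rule sum.cong) (auto simp: algebra_simps)
  also have "\<dots> = (\<Sum>i=1..n. a i * cos (2 * pi * real i * y) + b i * sin (2 * pi * real i * y))
      + (t - a k) * cos (2 * pi * real k * y)"
    using assms by (simp add: sum.distrib)
  finally show ?thesis using assms unfolding trig_def by simp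
qed

lemma trig_updbk:
  assumes "k \<in> {1..n}"
  shows "trig n a (b(k := t)) y = trig n a b y + (t - b k) * sin (2 * pi * real k * y)"
proof -
  have "(\<Sum>i=1..n. a i * cos (2 * pi * real i * y) + (b(k:=t)) i * sin (2 * pi * real i * y))
     = (\<Sum>i=1..n. (a i * cos (2 * pi * real i * y) + b i * sin (2 * pi * real i * y))
         + (if i = k then (t - b k) * sin (2 * pi * real i * y) else 0))"
    by (rule sum.cong) (auto simp: algebra_simps)
  also have "\<dots> = (\<Sum>i=1..n. a i * cos (2 * pi * real i * y) + b i * sin (2 * pi * real i * y))
      + (t - b k) * sin (2 * pi * real k * y)"
    using assms by (simp add: sum.distrib)
  finally show ?thesis using assms unfolding trig_def by simp
qed

lemma deriv_lemma:
  fixes u g :: "real \<Rightarrow> real"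
  assumes a: "0 < \<alpha>" and cu: "continuous_on UNIV u" and cg: "continuous_on UNIV g"
    and pos: "\<forall>y. u y > 0"
  shows "((\<lambda>t. integral {0..1} (\<lambda>y. phi \<alpha> j (u y + (t - tz) * g y))) has_real_derivative
           integral {0..1} (\<lambda>y. g y * (cj \<alpha> j / u y powr (1/\<alpha>)))) (at tz)"
proof -
  have cu1: "continuous_on {0..1} u" using cu continuous_on_subset by blast
  have cg1: "continuous_on {0..1} (\<lambda>y. \<bar>g y\<bar>)" using cg continuous_on_subset
    by (blast intro: continuous_intros)
  obtain y0 where "y0 \<in> {0..1}" "\<forall>y\<in>{0..1}. u y0 \<le> u y"
    using continuous_attains_inf[OF compact_Icc _ cu1] by auto
  then obtain \<delta> where d: "\<delta> > 0" "\<forall>y\<in>{0..1}. \<delta> \<le> u y" using pos by blast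
  obtain y1 where "y1 \<in> {0..1}" "\<forall>y\<in>{0..1}. \<bar>g y\<bar> \<le> \<bar>g y1\<bar>"
    using continuous_attains_sup[OF compact_Icc _ cg1] by auto
  then obtain M where M: "M > 0" "\<forall>y\<in>{0..1}. \<bar>g y\<bar> \<le> M"
    by (metis abs_ge_zero add_pos_nonneg dual_order.trans less_add_same_cancel2 zero_less_one le_add_same_cancel2 less_eq_real_def)
  define r where "r = \<delta> / (2 * M)"
  have r: "r > 0" using d M by (simp add: r_def)
  have arg: "u y + (t - tz) * g y \<ge> \<delta> / 2" if "t \<in> ball tz r" "y \<in> {0..1}" for t y
  proof -
    have "\<bar>t - tz\<bar> < r" using that by (simp add: dist_real_def abs_minus_commute)
    hence "\<bar>(t - tz) * g y\<bar> \<le> r * M"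
      using M that r by (simp add: abs_mult mult_mono less_imp_le)
    also have "r * M = \<delta> / 2" using M by (simp add: r_def)
    finally have h: "\<bar>(t - tz) * g y\<bar> \<le> \<delta> / 2" .
    have "\<delta> \<le> u y" using d(2) that(2) by blast
    with h show ?thesis by (simp add: abs_le_iff)
  qed
  have argpos: "u y + (t - tz) * g y > 0" if "t \<in> ball tz r" "y \<in> {0..1}" for t y
    using arg[OF that] d by linarith
  have ne: "u y + (t - tz) * g y \<noteq> 0" if "dist tz t < r" "0 \<le> y" "y \<le> 1" for t y
  proof -
    have "0 < u y + (t - tz) * g y" using argpos[of t y] that by simp
    thus ?thesis by simp
  qed
  have D: "((\<lambda>t. integral (cbox 0 1) (\<lambda>y. phi \<alpha> j (u y + (t - tz) * g y))) has_field_derivative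
      integral (cbox 0 1) (\<lambda>y. cj \<alpha> j * (u y + (tz - tz) * g y) powr (-1/\<alpha>) * g y)) (at tz within ball tz r)"
  proof (rule leibniz_rule_field_derivative[where fx = "\<lambda>t y. cj \<alpha> j * (u y + (t - tz) * g y) powr (-1/\<alpha>) * g y"])
    fix t y :: real assume t: "t \<in> ball tz r" and y: "y \<in> cbox 0 1"
    have "((\<lambda>t. u y + (t - tz) * g y) has_real_derivative 1 * g y) (at t)"
      by (auto intro!: derivative_eq_intros)
    from DERIV_chain2[OF phi_deriv[OF a argpos[OF t]] this] y
    show "((\<lambda>t. phi \<alpha> j (u y + (t - tz) * g y)) has_field_derivative
        cj \<alpha> j * (u y + (t - tz) * g y) powr (-1/\<alpha>) * g y) (at t within ball tz r)"
      by (auto intro: has_field_derivative_at_within)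
  next
    fix t assume t: "t \<in> ball tz r"
    have cF1: "continuous_on {0..1} (\<lambda>y. u y + (t - tz) * g y)"
      by (auto intro!: continuous_intros cu1 continuous_on_subset[OF cg])
    have nz: "\<forall>y\<in>{0..1}. u y + (t - tz) * g y \<noteq> 0"
    proof
      fix y :: real assume "y \<in> {0..1}"
      from argpos[OF t this] show "u y + (t - tz) * g y \<noteq> 0" by simp
    qed
    have "continuous_on {0..1} (\<lambda>y. phi \<alpha> j (u y + (t - tz) * g y))"
    proof (cases "\<alpha> = 1")
      case True
      have "continuous_on {0..1} (\<lambda>y. cj \<alpha> j * ln (u y + (t - tz) * g y))"
        by (rule continuous_on_mult[OF continuous_on_const continuous_on_ln[OF cF1 nz]])
      thus ?thesis unfolding phi_def using True by simp
    next
      case False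
      have "continuous_on {0..1} (\<lambda>y. cj \<alpha> j * \<alpha> / (\<alpha> - 1) * (u y + (t - tz) * g y) powr ((\<alpha> - 1) / \<alpha>))"
        by (rule continuous_on_mult[OF continuous_on_const continuous_on_powr[OF cF1 continuous_on_const nz]])
      thus ?thesis unfolding phi_def using False by simp
    qed
    thus "(\<lambda>y. phi \<alpha> j (u y + (t - tz) * g y)) integrable_on cbox 0 1"
      by (simp add: integrable_continuous_real)
  next
    have cus: "continuous_on (ball tz r \<times> {0..1}) (\<lambda>x. u (snd x))"
      using continuous_on_compose2[OF cu continuous_on_snd[OF continuous_on_id]] by simp
    have cgs: "continuous_on (ball tz r \<times> {0..1}) (\<lambda>x. g (snd x))"
      using continuous_on_compose2[OF cg continuous_on_snd[OF continuous_on_id]] by simp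
    show "continuous_on (ball tz r \<times> cbox 0 1)
      (\<lambda>(t, y). cj \<alpha> j * (u y + (t - tz) * g y) powr (-1/\<alpha>) * g y)"
      unfolding case_prod_beta cbox_interval
    proof -
      have cF: "continuous_on (ball tz r \<times> {0..1}) (\<lambda>x. u (snd x) + (fst x - tz) * g (snd x))"
        by (auto intro!: continuous_intros cus cgs)
      have cP: "continuous_on (ball tz r \<times> {0..1}) (\<lambda>x. (u (snd x) + (fst x - tz) * g (snd x)) powr (-1/\<alpha>))"
        by (rule continuous_on_powr[OF cF continuous_on_const]) (use ne in auto)
      show "continuous_on (ball tz r \<times> {0..1}) (\<lambda>x. cj \<alpha> j * (u (snd x) + (fst x - tz) * g (snd x)) powr (-1/\<alpha>) * g (snd x))"
        by (rule continuous_on_mult[OF continuous_on_mult[OF continuous_on_const cP] cgs])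
    qed
  next
    show "tz \<in> ball tz r" using r by simp
  next
    show "convex (ball tz r)" by (rule convex_ball)
  qed
  have "at tz within ball tz r = at tz"
    by (rule at_within_open) (simp_all add: r)
  moreover have "integral (cbox 0 1) (\<lambda>y. cj \<alpha> j * (u y + (tz - tz) * g y) powr (-1/\<alpha>) * g y)
     = integral {0..1} (\<lambda>y. g y * (cj \<alpha> j / u y powr (1/\<alpha>)))"
    by (simp add: cbox_interval powr_minus_divide mult.commute)
  ultimately show ?thesis using D by (simp add: cbox_interval)
qed


lemma conv_expand:
  fixes m :: "real \<Rightarrow> real"
  assumes cm: "continuous_on {0..1} m"
  shows "integral {0..1} (\<lambda>y. trig n p q (x - y) * m y) = p 0 * integral {0..1} m +
    (\<Sum>k=1..n. cos (2*pi*real k*x) * (p k * integral {0..1} (\<lambda>y. cos (2*pi*real k*y) * m y)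
                                   - q k * integral {0..1} (\<lambda>y. sin (2*pi*real k*y) * m y))
             + sin (2*pi*real k*x) * (p k * integral {0..1} (\<lambda>y. sin (2*pi*real k*y) * m y)
                                   + q k * integral {0..1} (\<lambda>y. cos (2*pi*real k*y) * m y)))"
proof -
  define C where "C k = integral {0..1} (\<lambda>y. cos (2*pi*real k*y) * m y)" for k
  define S where "S k = integral {0..1} (\<lambda>y. sin (2*pi*real k*y) * m y)" for k
  have hC: "((\<lambda>y. cos (2*pi*real k*y) * m y) has_integral C k) {0..1}" for k
    unfolding C_def
    by (rule integrable_integral, rule integrable_continuous_interval)
       (intro continuous_intros cm)
  have hS: "((\<lambda>y. sin (2*pi*real k*y) * m y) has_integral S k) {0..1}" for k
    unfolding S_def
    by (rule integrable_integral, rule integrable_continuous_interval)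
       (intro continuous_intros cm)
  have hm: "(m has_integral integral {0..1} m) {0..1}"
    by (rule integrable_integral, rule integrable_continuous_interval) (rule cm)
  have pw: "trig n p q (x - y) * m y = p 0 * m y +
    (\<Sum>k=1..n. cos (2*pi*real k*x) * (p k * (cos (2*pi*real k*y) * m y) - q k * (sin (2*pi*real k*y) * m y))
             + sin (2*pi*real k*x) * (p k * (sin (2*pi*real k*y) * m y) + q k * (cos (2*pi*real k*y) * m y)))" for y
  proof -
    have "(p k * cos (2 * pi * real k * (x - y)) + q k * sin (2 * pi * real k * (x - y))) * m y
      = cos (2*pi*real k*x) * (p k * (cos (2*pi*real k*y) * m y) - q k * (sin (2*pi*real k*y) * m y))
             + sin (2*pi*real k*x) * (p k * (sin (2*pi*real k*y) * m y) + q k * (cos (2*pi*real k*y) * m y))" for k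
      by (simp add: right_diff_distrib cos_diff sin_diff algebra_simps)
    thus ?thesis unfolding trig_def distrib_right sum_distrib_right by simp
  qed
  have "((\<lambda>y. trig n p q (x - y) * m y) has_integral (p 0 * integral {0..1} m +
    (\<Sum>k=1..n. cos (2*pi*real k*x) * (p k * C k - q k * S k)
             + sin (2*pi*real k*x) * (p k * S k + q k * C k)))) {0..1}"
    unfolding pw
    by (intro has_integral_add has_integral_mult_right has_integral_diff has_integral_sum hC hS hm finite_atLeastAtMost)
  thus ?thesis unfolding C_def S_def by (rule integral_unique)
qed


lemma lin_div1: "p*(X/D) - q*(Y/D) = (p*X - q*Y)/(D::real)"
  by (cases "D = 0") (simp_all add: field_simps)

lemma lin_div2: "p*(Y/D) + q*(X/D) = (p*Y + q*X)/(D::real)"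
  by (cases "D = 0") (simp_all add: field_simps)

lemma cj_pos: "j \<noteq> 0 \<Longrightarrow> cj \<alpha> j > 0"
  unfolding cj_def by simp

lemma cj_powr: "0 < \<alpha> \<Longrightarrow> cj \<alpha> j powr \<alpha> = j^2 / 2"
  unfolding cj_def by (simp add: powr_powr)

lemma mm_pow:
  assumes "0 < \<alpha>" "j \<noteq> 0" "0 < u"
  shows "j^2 / (2 * (cj \<alpha> j / u powr (1/\<alpha>)) powr \<alpha>) = u"
proof -
  have "(cj \<alpha> j / u powr (1/\<alpha>)) powr \<alpha> = cj \<alpha> j powr \<alpha> / (u powr (1/\<alpha>)) powr \<alpha>"
    using assms cj_pos[of j \<alpha>] by (simp add: powr_divide)
  also have "\<dots> = (j^2/2) / u" using assms by (simp add: cj_powr powr_powr)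
  finally show ?thesis using assms by simp
qed

lemma m_formula:
  assumes "0 < \<alpha>" "j \<noteq> 0" "0 < mx"
  shows "cj \<alpha> j / (j^2/(2*mx powr \<alpha>)) powr (1/\<alpha>) = mx"
proof -
  have "(j^2/(2*mx powr \<alpha>)) powr (1/\<alpha>) = ((j^2/2) / mx powr \<alpha>) powr (1/\<alpha>)" by simp
  also have "\<dots> = (j^2/2) powr (1/\<alpha>) / (mx powr \<alpha>) powr (1/\<alpha>)"
    by (rule powr_divide)
  also have "\<dots> = cj \<alpha> j / mx" using assms by (simp add: cj_def powr_powr)
  finally show ?thesis using assms cj_pos[of j \<alpha>] by simp
qed

lemma Phi_deriv0:
  assumes "0 < \<alpha>" "continuous_on UNIV V" "inC n V a b"
  shows "((\<lambda>t. Phi \<alpha> j n V (a(0:=t)) b) has_real_derivative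
     integral {0..1} (\<lambda>y. cj \<alpha> j / (trig n a b y - V y) powr (1/\<alpha>))) (at (a 0))"
proof -
  have cu: "continuous_on UNIV (\<lambda>y. trig n a b y - V y)"
    by (intro continuous_intros cont_trig assms(2))
  have e: "(\<lambda>t. Phi \<alpha> j n V (a(0:=t)) b) =
    (\<lambda>t. integral {0..1} (\<lambda>y. phi \<alpha> j ((trig n a b y - V y) + (t - a 0) * 1)))"
    by (simp add: fun_eq_iff Phi_def trig_upd0 algebra_simps)
  show ?thesis unfolding e
    using deriv_lemma[OF assms(1) cu continuous_on_const[of UNIV "1::real"], where j=j and tz="a 0"] assms(3)
    by (simp add: inC_def)
qed

lemma Phi_derivk:
  assumes "0 < \<alpha>" "continuous_on UNIV V" "inC n V a b" "k \<in> {1..n}"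
  shows "((\<lambda>t. Phi \<alpha> j n V (a(k:=t)) b) has_real_derivative
     integral {0..1} (\<lambda>y. cos (2 * pi * real k * y) * (cj \<alpha> j / (trig n a b y - V y) powr (1/\<alpha>)))) (at (a k))"
proof -
  have cu: "continuous_on UNIV (\<lambda>y. trig n a b y - V y)"
    by (intro continuous_intros cont_trig assms(2))
  have cg: "continuous_on UNIV (\<lambda>y. cos (2 * pi * real k * y))"
    by (intro continuous_intros)
  have e: "(\<lambda>t. Phi \<alpha> j n V (a(k:=t)) b) =
    (\<lambda>t. integral {0..1} (\<lambda>y. phi \<alpha> j ((trig n a b y - V y) + (t - a k) * cos (2 * pi * real k * y))))"
    using assms(4) by (simp add: fun_eq_iff Phi_def trig_updk algebra_simps)
  show ?thesis unfolding e
    using deriv_lemma[OF assms(1) cu cg, where j=j and tz="a k"] assms(3)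
    by (simp add: inC_def)
qed

lemma Phi_derivbk:
  assumes "0 < \<alpha>" "continuous_on UNIV V" "inC n V a b" "k \<in> {1..n}"
  shows "((\<lambda>t. Phi \<alpha> j n V a (b(k:=t))) has_real_derivative
     integral {0..1} (\<lambda>y. sin (2 * pi * real k * y) * (cj \<alpha> j / (trig n a b y - V y) powr (1/\<alpha>)))) (at (b k))"
proof -
  have cu: "continuous_on UNIV (\<lambda>y. trig n a b y - V y)"
    by (intro continuous_intros cont_trig assms(2))
  have cg: "continuous_on UNIV (\<lambda>y. sin (2 * pi * real k * y))"
    by (intro continuous_intros)
  have e: "(\<lambda>t. Phi \<alpha> j n V a (b(k:=t))) =
    (\<lambda>t. integral {0..1} (\<lambda>y. phi \<alpha> j ((trig n a b y - V y) + (t - b k) * sin (2 * pi * real k * y))))"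
    using assms(4) by (simp add: fun_eq_iff Phi_def trig_updbk algebra_simps)
  show ?thesis unfolding e
    using deriv_lemma[OF assms(1) cu cg, where j=j and tz="b k"] assms(3)
    by (simp add: inC_def)
qed


theorem proposition4p1:
  fixes \<alpha> j :: real and n :: nat and V :: "real \<Rightarrow> real" and p q :: "nat \<Rightarrow> real"
  assumes "0 < \<alpha>" and "\<alpha> \<le> 2" and "j \<noteq> 0" and "C2T V"
    and "\<forall>k\<in>{1..n}. p k ^ 2 + q k ^ 2 > 0"
  shows "(\<forall>m H. solvesP \<alpha> j V (trig n p q) m H \<longrightarrow>
            (\<exists>a b. inC n V a b \<and> solvesS \<alpha> j n V p q a b \<and>
               (\<forall>x. m x = cj \<alpha> j / (trig n a b x - V x) powr (1 / \<alpha>)) \<and>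
               H = a 0 - p 0)) \<and>
         (\<forall>a b. inC n V a b \<and> solvesS \<alpha> j n V p q a b \<longrightarrow>
            solvesP \<alpha> j V (trig n p q)
              (\<lambda>x. cj \<alpha> j / (trig n a b x - V x) powr (1 / \<alpha>)) (a 0 - p 0))"
proof -
  note a = assms(1) and jn = assms(3) and N = assms(5)
  have Vper: "periodic1 V" using assms(4) by (simp add: C2T_def)
  have cV: "continuous_on UNIV V"
  proof -
    obtain V' where "\<forall>x. (V has_real_derivative V' x) (at x)"
      using assms(4) unfolding C2T_def by blast
    hence "\<forall>x. isCont V x" using DERIV_isCont by blast
    thus ?thesis by (simp add: continuous_at_imp_continuous_on)
  qed
  show ?thesis
  proof (intro conjI allI impI)
    fix m H assume P: "solvesP \<alpha> j V (trig n p q) m H"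
    have cm: "continuous_on {0..1} m" using P
      by (auto simp: solvesP_def contT_def intro: continuous_on_subset)
    have mpos: "\<forall>x. m x > 0" and m1: "integral {0..1} m = 1"
      and eqP: "\<forall>x. j ^ 2 / (2 * m x powr \<alpha>) + V x = integral {0..1} (\<lambda>y. trig n p q (x - y) * m y) + H"
      using P by (auto simp: solvesP_def)
    define C where "C k = integral {0..1} (\<lambda>y. cos (2*pi*real k*y) * m y)" for k
    define S where "S k = integral {0..1} (\<lambda>y. sin (2*pi*real k*y) * m y)" for k
    define a where "a k = (if k = 0 then p 0 + H else p k * C k - q k * S k)" for k
    define b where "b k = p k * S k + q k * C k" for k
    have tr: "trig n a b x = integral {0..1} (\<lambda>y. trig n p q (x - y) * m y) + H" for x
    proof -
      have "(\<Sum>k=1..n. a k * cos (2 * pi * real k * x) + b k * sin (2 * pi * real k * x))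
        = (\<Sum>k=1..n. cos (2*pi*real k*x) * (p k * C k - q k * S k) + sin (2*pi*real k*x) * (p k * S k + q k * C k))"
        by (rule sum.cong) (auto simp: a_def b_def)
      moreover have "integral {0..1} (\<lambda>y. trig n p q (x - y) * m y) = p 0 +
        (\<Sum>k=1..n. cos (2*pi*real k*x) * (p k * C k - q k * S k) + sin (2*pi*real k*x) * (p k * S k + q k * C k))"
        unfolding conv_expand[OF cm] m1 C_def S_def by simp
      ultimately show ?thesis unfolding trig_def by (simp add: a_def)
    qed
    have u: "trig n a b x - V x = j ^ 2 / (2 * m x powr \<alpha>)" for x
      using eqP tr[of x] by (metis add_diff_cancel_right')
    have upos: "trig n a b x - V x > 0" for x
    proof -
      have "0 < m x" using mpos by blast
      hence "0 < m x powr \<alpha>" by simp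
      moreover have "0 < j ^ 2" using jn by simp
      ultimately show ?thesis unfolding u by simp
    qed
    have inC: "inC n V a b" using upos by (simp add: inC_def)
    have mf: "m x = cj \<alpha> j / (trig n a b x - V x) powr (1 / \<alpha>)" for x
      unfolding u using m_formula[OF a jn, of "m x"] mpos by simp
    have mfe: "(\<lambda>y. cj \<alpha> j / (trig n a b y - V y) powr (1 / \<alpha>)) = m"
      using mf by auto
    have S: "solvesS \<alpha> j n V p q a b"
      unfolding solvesS_def
    proof (intro conjI ballI)
      show "((\<lambda>t. Phi \<alpha> j n V (a(0 := t)) b) has_real_derivative 1) (at (a 0))"
        using Phi_deriv0[OF a cV inC, of j] unfolding mf[symmetric] by (simp add: m1)
    next
      fix k assume k: "k \<in> {1..n}"
      have Nk: "p k ^ 2 + q k ^ 2 \<noteq> 0" using N k by force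
      have ak: "a k = p k * C k - q k * S k" using k by (simp add: a_def)
      have "C k = (p k * a k + q k * b k) / (p k ^ 2 + q k ^ 2)"
        using Nk unfolding ak b_def by (simp add: field_simps power2_eq_square)
      thus "((\<lambda>t. Phi \<alpha> j n V (a(k := t)) b) has_real_derivative
          (p k * a k + q k * b k) / (p k ^ 2 + q k ^ 2)) (at (a k))"
        using Phi_derivk[OF a cV inC k, of j] unfolding mf[symmetric] by (simp add: C_def)
      have "S k = (p k * b k - q k * a k) / (p k ^ 2 + q k ^ 2)"
        using Nk unfolding ak b_def by (simp add: field_simps power2_eq_square)
      thus "((\<lambda>t. Phi \<alpha> j n V a (b(k := t))) has_real_derivative
          (p k * b k - q k * a k) / (p k ^ 2 + q k ^ 2)) (at (b k))"
        using Phi_derivbk[OF a cV inC k, of j] unfolding mf[symmetric] by (simp add: S_def)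
    qed
    show "\<exists>a b. inC n V a b \<and> solvesS \<alpha> j n V p q a b \<and>
               (\<forall>x. m x = cj \<alpha> j / (trig n a b x - V x) powr (1 / \<alpha>)) \<and> H = a 0 - p 0"
      using inC S mf by (intro exI[of _ a] exI[of _ b]) (auto simp: a_def)
  next
    fix a b assume ab: "inC n V a b \<and> solvesS \<alpha> j n V p q a b"
    hence inC: "inC n V a b" and S: "solvesS \<alpha> j n V p q a b" by auto
    define m where "m = (\<lambda>x. cj \<alpha> j / (trig n a b x - V x) powr (1 / \<alpha>))"
    have upos: "trig n a b x - V x > 0" for x using inC by (simp add: inC_def)
    have mpos: "m x > 0" for x
    proof -
      have "0 < (trig n a b x - V x) powr (1 / \<alpha>)" using upos[of x] by simp
      thus ?thesis unfolding m_def using cj_pos[OF jn, of \<alpha>] by simp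
    qed
    have cmU: "continuous_on UNIV m" unfolding m_def
    proof (intro continuous_intros cont_trig cV)
      show "\<forall>x\<in>UNIV. trig n a b x - V x \<noteq> 0" using upos by (metis less_irrefl)
      show "\<forall>x\<in>UNIV. (trig n a b x - V x) powr (1 / \<alpha>) \<noteq> 0" using upos by (metis less_irrefl powr_eq_0_iff)
    qed
    have cm: "continuous_on {0..1} m" using cmU continuous_on_subset by blast
    have mper: "periodic1 m" using Vper unfolding periodic1_def m_def by (simp add: trig_periodic)
    have m1: "integral {0..1} m = 1"
      using DERIV_unique[OF Phi_deriv0[OF a cV inC, of j]] S unfolding solvesS_def m_def by blast
    define C where "C k = integral {0..1} (\<lambda>y. cos (2*pi*real k*y) * m y)" for k
    define Sn where "Sn k = integral {0..1} (\<lambda>y. sin (2*pi*real k*y) * m y)" for k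
    have Ck: "C k = (p k * a k + q k * b k) / (p k ^ 2 + q k ^ 2)" if k: "k \<in> {1..n}" for k
      using DERIV_unique[OF Phi_derivk[OF a cV inC k, of j]] S k unfolding solvesS_def m_def C_def by blast
    have Sk: "Sn k = (p k * b k - q k * a k) / (p k ^ 2 + q k ^ 2)" if k: "k \<in> {1..n}" for k
      using DERIV_unique[OF Phi_derivbk[OF a cV inC k, of j]] S k unfolding solvesS_def m_def Sn_def by blast
    have eq: "j ^ 2 / (2 * m x powr \<alpha>) + V x = integral {0..1} (\<lambda>y. trig n p q (x - y) * m y) + (a 0 - p 0)" for x
    proof -
      have "(\<Sum>k=1..n. cos (2*pi*real k*x) * (p k * C k - q k * Sn k) + sin (2*pi*real k*x) * (p k * Sn k + q k * C k))
        = (\<Sum>k=1..n. a k * cos (2 * pi * real k * x) + b k * sin (2 * pi * real k * x))"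
      proof (rule sum.cong)
        fix k assume k: "k \<in> {1..n}"
        have Nk: "p k ^ 2 + q k ^ 2 \<noteq> 0" using N k by force
        have e1: "p k * (p k * a k + q k * b k) - q k * (p k * b k - q k * a k) = (p k ^ 2 + q k ^ 2) * a k"
          by (simp add: algebra_simps power2_eq_square)
        have e2: "p k * (p k * b k - q k * a k) + q k * (p k * a k + q k * b k) = (p k ^ 2 + q k ^ 2) * b k"
          by (simp add: algebra_simps power2_eq_square)
        have "p k * C k - q k * Sn k = (p k * (p k * a k + q k * b k) - q k * (p k * b k - q k * a k)) / (p k ^ 2 + q k ^ 2)"
          unfolding Ck[OF k] Sk[OF k] by (rule lin_div1)
        also have "\<dots> = a k" unfolding e1 using Nk by simp
        finally have r1: "p k * C k - q k * Sn k = a k" .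
        have "p k * Sn k + q k * C k = (p k * (p k * b k - q k * a k) + q k * (p k * a k + q k * b k)) / (p k ^ 2 + q k ^ 2)"
          unfolding Ck[OF k] Sk[OF k] by (rule lin_div2)
        also have "\<dots> = b k" unfolding e2 using Nk by simp
        finally have r2: "p k * Sn k + q k * C k = b k" .
        note r1 r2
        thus "cos (2*pi*real k*x) * (p k * C k - q k * Sn k) + sin (2*pi*real k*x) * (p k * Sn k + q k * C k)
          = a k * cos (2 * pi * real k * x) + b k * sin (2 * pi * real k * x)" by simp
      qed simp
      moreover have "integral {0..1} (\<lambda>y. trig n p q (x - y) * m y) = p 0 +
        (\<Sum>k=1..n. cos (2*pi*real k*x) * (p k * C k - q k * Sn k) + sin (2*pi*real k*x) * (p k * Sn k + q k * C k))"
        unfolding conv_expand[OF cm] m1 C_def Sn_def by simp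
      ultimately have "integral {0..1} (\<lambda>y. trig n p q (x - y) * m y) = p 0 + trig n a b x - a 0"
        unfolding trig_def by simp
      moreover have "j ^ 2 / (2 * m x powr \<alpha>) = trig n a b x - V x"
        unfolding m_def by (rule mm_pow[OF a jn upos])
      ultimately show ?thesis by simp
    qed
    show "solvesP \<alpha> j V (trig n p q) (\<lambda>x. cj \<alpha> j / (trig n a b x - V x) powr (1 / \<alpha>)) (a 0 - p 0)"
      unfolding m_def[symmetric] solvesP_def contT_def using cmU mper mpos m1 eq by blast
  qed
qed

end
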